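(* In the permutation model $\mathcal{N}_{\mathbb{R}}$, the family $\mathcal{A}=\{A_n: n\in\omega\}$ is denumerable but has no partial multiple choice function. Consequently, $\mathbf{CAC}(\leq 2^{\aleph_0})$ is false in $\mathcal{N}_{\mathbb{R}}$.
   Context: Permutation model $\mathcal{N}_{\mathbb{R}}$: Let $\mathcal{M}$ be a model of $\mathbf{ZFA}+\mathbf{AC}$ whose set of atoms is $A=\bigcup_{n\in\omega}A_n$, a pairwise disjoint union, where $A_n=\{a_{n,x}:x\in\mathbb{R}\}$ and $x\mapsto a_{n,x}$ is a bijection (in $\mathcal{M}$). Let $\leq_n$ be the linear order on $A_n$ given by $a_{n,x}\leq_n a_{n,y}\iff x\le y$. Let $\mathcal{G}$ be the group of all permutations $\pi$ of $A$ such that for every $n$, $\pi\upharpoonright A_n$ is an order-automorphism of $\langle A_n,\leq_n\rangle$. Every permutation of $A$ extends to an $\in$-automorphism of $\mathcal{M}$. Let $\mathcal{I}$ be the ideal of all $E\subseteq A$ with $E\subseteq\bigcup_{n\in S}A_n$ for some finite $S\subseteq\omega$. For $x\in\mathcal{M}$, $\mathrm{sym}_{\mathcal{G}}(x)=\{\phi\in\mathcal{G}:\phi(x)=x\}$ and $\mathrm{fix}_{\mathcal{G}}(E)=\{\phi\in\mathcal{G}:\phi(t)=t \text{ for all } t\in E\}$. Then $\mathcal{N}_{\mathbb{R}}=\{x\in\mathcal{M}: \text{for every } t\in \mathrm{TC}(\{x\}) \text{ there is } E\in\mathcal{I} \text{ with } \mathrm{fix}_{\mathcal{G}}(E)\subseteq\mathrm{sym}_{\mathcal{G}}(t)\}$,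 where $\mathrm{TC}$ is transitive closure. A partial multiple choice function of a family $\{X_j:j\in J\}$ is a function $f$ defined on an infinite $I\subseteq J$ with $f(j)$ a non-empty finite subset of $X_j$ for $j\in I$. $\mathbf{CAC}(\leq 2^{\aleph_0})$: every denumerable family of non-empty sets, each equipotent to a subset of $\mathbb{R}$, has a choice function. *)

theory Defs
  imports Complex_Main
begin

text \<open>Atoms are pairs (n, x) :: nat \<times> real, standing for a_{n,x}; A_n = {n} \<times> UNIV.
  Natural numbers and reals are pure (kernel) objects, fixed by every permutation.\<close>

type_synonym atom = "nat \<times> real"

definition Alev :: "nat \<Rightarrow> atom set" where
  "Alev n = {a. fst a = n}"

definition Gperm :: "(atom \<Rightarrow> atom) set" where
  "Gperm = {\<pi>. bij \<pi> \<and> (\<forall>a. fst (\<pi> a) = fst a) \<and>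
     (\<forall>n x y. x \<le> y \<longleftrightarrow> snd (\<pi> (n, x)) \<le> snd (\<pi> (n, y)))}"

text \<open>fix_G(E) for E = union of finitely many levels (these sets are cofinal in the ideal I,
  so they suffice as supports).\<close>
definition fixlev :: "nat set \<Rightarrow> (atom \<Rightarrow> atom) set" where
  "fixlev S = {\<pi> \<in> Gperm. \<forall>a. fst a \<in> S \<longrightarrow> \<pi> a = a}"

text \<open>Action of a permutation on a set of pairs (n, F) with n pure and F a set of atoms
  (the graph of a function from a subset of omega to sets of atoms).\<close>
definition act_nat_sets :: "(atom \<Rightarrow> atom) \<Rightarrow> (nat \<times> atom set) set \<Rightarrow> (nat \<times> atom set) set" where
  "act_nat_sets \<pi> f = (\<lambda>(n, F). (n, \<pi> ` F)) ` f"

definition act_pure_atom :: "(atom \<Rightarrow> atom) \<Rightarrow> ('p \<times> atom) set \<Rightarrow> ('p \<times> atom) set" where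
  "act_pure_atom \<pi> g = (\<lambda>(x, a). (x, \<pi> a)) ` g"

text \<open>For the objects considered, every element of the transitive closure
  other than the object itself is either pure, an atom, a finite set of atoms, or a pair/set
  built from these (all automatically finitely supported: a finite set of atoms F is supported
  by the finitely many levels it meets), so membership reduces to the object itself having
  finite support.\<close>
definition in_NR_nat_sets :: "(nat \<times> atom set) set \<Rightarrow> bool" where
  "in_NR_nat_sets f \<longleftrightarrow> (\<forall>p\<in>f. finite (snd p)) \<and>
     (\<exists>S. finite S \<and> (\<forall>\<pi>\<in>fixlev S. act_nat_sets \<pi> f = f))"

definition in_NR_pure_atom :: "('p \<times> atom) set \<Rightarrow> bool" where
  "in_NR_pure_atom g \<longleftrightarrow> (\<exists>S. finite S \<and> (\<forall>\<pi>\<in>fixlev S. act_pure_atom \<pi> g = g))"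

definition pmcf :: "nat set \<Rightarrow> (nat \<Rightarrow> atom set) \<Rightarrow> bool" where
  "pmcf I F \<longleftrightarrow> infinite I \<and> (\<forall>n\<in>I. finite (F n) \<and> F n \<noteq> {} \<and> F n \<subseteq> Alev n)"

definition graph_on :: "'a set \<Rightarrow> ('a \<Rightarrow> 'b) \<Rightarrow> ('a \<times> 'b) set" where
  "graph_on I F = {(n, F n) | n. n \<in> I}"

end

theory Submission
  imports Defs
begin

definition shf :: "nat \<Rightarrow> atom \<Rightarrow> atom" where
  "shf k a = (fst a, if fst a = k then snd a + 1 else snd a)"

lemma shf_bij: "bij (shf k)"
proof -
  let ?g = "\<lambda>a. (fst a, if fst a = k then snd a - 1 else snd a) :: atom"
  have "?g \<circ> shf k = id" "shf k \<circ> ?g = id" by (auto simp: shf_def fun_eq_iff)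
  then show ?thesis by (rule o_bij)
qed

lemma shf_fix: "k \<notin> S \<Longrightarrow> shf k \<in> fixlev S"
  unfolding fixlev_def Gperm_def using shf_bij by (auto simp: shf_def)

lemma part4: "\<not> (\<exists>I F. pmcf I F \<and> in_NR_nat_sets (graph_on I F))"
proof
  assume "\<exists>I F. pmcf I F \<and> in_NR_nat_sets (graph_on I F)"
  then obtain I F S where p: "pmcf I F" and S: "finite S"
    and inv: "\<forall>\<pi>\<in>fixlev S. act_nat_sets \<pi> (graph_on I F) = graph_on I F"
    unfolding in_NR_nat_sets_def by blast
  from p have "infinite I" unfolding pmcf_def by blast
  hence "infinite (I - S)" using S by simp
  then obtain n where n: "n \<in> I" "n \<notin> S" using infinite_imp_nonempty by blast
  have fin: "finite (F n)" "F n \<noteq> {}" "F n \<subseteq> Alev n" using p n unfolding pmcf_def by auto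
  have "act_nat_sets (shf n) (graph_on I F) = graph_on I F" using inv shf_fix[OF n(2)] by blast
  moreover have "(n, shf n ` F n) \<in> act_nat_sets (shf n) (graph_on I F)"
    unfolding act_nat_sets_def graph_on_def using n by force
  ultimately have "(n, shf n ` F n) \<in> graph_on I F" by simp
  hence eq: "shf n ` F n = F n" unfolding graph_on_def by auto
  define m where "m = Max (snd ` F n)"
  have "m \<in> snd ` F n" unfolding m_def using fin by simp
  then obtain a where a: "a \<in> F n" "snd a = m" by blast
  have fa: "fst a = n" using a fin unfolding Alev_def by auto
  have "shf n a \<in> F n" using eq a by blast
  hence "snd (shf n a) \<le> m" unfolding m_def using fin by simp
  thus False using a fa by (simp add: shf_def)
qed

lemma part5: "\<not> (\<exists>c. (\<forall>n. c n \<in> Alev n) \<and> in_NR_pure_atom (graph_on (UNIV :: nat set) c))"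
proof
  assume "\<exists>c. (\<forall>n. c n \<in> Alev n) \<and> in_NR_pure_atom (graph_on (UNIV :: nat set) c)"
  then obtain c S where c: "\<forall>n. c n \<in> Alev n" and S: "finite S"
    and inv: "\<forall>\<pi>\<in>fixlev S. act_pure_atom \<pi> (graph_on (UNIV :: nat set) c) = graph_on UNIV c"
    unfolding in_NR_pure_atom_def by blast
  obtain n where n: "n \<notin> S" using S ex_new_if_finite infinite_UNIV_nat by blast
  have "act_pure_atom (shf n) (graph_on (UNIV :: nat set) c) = graph_on UNIV c"
    using inv shf_fix[OF n] by blast
  moreover have "(n, shf n (c n)) \<in> act_pure_atom (shf n) (graph_on (UNIV :: nat set) c)"
    unfolding act_pure_atom_def graph_on_def by force
  ultimately have "(n, shf n (c n)) \<in> graph_on UNIV c" by simp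
  hence "shf n (c n) = c n" unfolding graph_on_def by auto
  moreover have "fst (c n) = n" using c unfolding Alev_def by auto
  ultimately show False by (simp add: shf_def prod_eq_iff)
qed

lemma part1: "inj Alev"
proof (rule injI)
  fix m n assume "Alev m = Alev n"
  moreover have "(m, 0::real) \<in> Alev m" by (simp add: Alev_def)
  ultimately have "(m, 0::real) \<in> Alev n" by simp
  thus "m = n" unfolding Alev_def by auto
qed

lemma part2: "\<forall>\<pi>\<in>Gperm. \<forall>n. \<pi> ` Alev n = Alev n"
proof (intro ballI allI)
  fix \<pi> and n :: nat assume g: "\<pi> \<in> Gperm"
  hence b: "bij \<pi>" and f: "\<forall>a. fst (\<pi> a) = fst a" unfolding Gperm_def by auto
  show "\<pi> ` Alev n = Alev n"
  proof
    show "\<pi> ` Alev n \<subseteq> Alev n" using f unfolding Alev_def by auto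
    show "Alev n \<subseteq> \<pi> ` Alev n"
    proof
      fix a assume a: "a \<in> Alev n"
      obtain b where "a = \<pi> b" using b by (metis bij_pointE)
      thus "a \<in> \<pi> ` Alev n" using a f unfolding Alev_def by auto
    qed
  qed
qed

lemma part3: "\<forall>n. \<exists>h. bij_betw h (UNIV :: real set) (Alev n) \<and> in_NR_pure_atom (graph_on UNIV h)"
proof
  fix n :: nat
  let ?h = "\<lambda>x::real. (n, x)"
  have "bij_betw ?h UNIV (Alev n)"
    unfolding bij_betw_def inj_on_def Alev_def by (auto simp: image_iff intro: prod_eqI)
  moreover have "in_NR_pure_atom (graph_on UNIV ?h)"
    unfolding in_NR_pure_atom_def
  proof (intro exI[of _ "{n}"] conjI ballI)
    fix \<pi> assume "\<pi> \<in> fixlev {n}"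
    hence "\<forall>x. \<pi> (n, x) = (n, x)" unfolding fixlev_def by auto
    thus "act_pure_atom \<pi> (graph_on UNIV ?h) = graph_on UNIV ?h"
      unfolding act_pure_atom_def graph_on_def by (auto simp: image_iff)
  qed simp
  ultimately show "\<exists>h. bij_betw h (UNIV :: real set) (Alev n) \<and> in_NR_pure_atom (graph_on UNIV h)"
    by blast
qed

theorem proposition3p9:
  shows
   \<comment> \<open>the family is denumerable in N_R: the enumeration n |-> A_n is injective and fixed by all of G\<close>
   "inj Alev \<and> (\<forall>\<pi>\<in>Gperm. \<forall>n. \<pi> ` Alev n = Alev n)
    \<comment> \<open>each A_n is equipotent (in N_R) to the reals\<close>
    \<and> (\<forall>n. \<exists>h. bij_betw h (UNIV :: real set) (Alev n) \<and> in_NR_pure_atom (graph_on UNIV h))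
    \<comment> \<open>no partial multiple choice function lies in N_R\<close>
    \<and> \<not> (\<exists>I F. pmcf I F \<and> in_NR_nat_sets (graph_on I F))
    \<comment> \<open>hence CAC(<= 2^aleph_0) fails: this family has no choice function in N_R\<close>
    \<and> \<not> (\<exists>c. (\<forall>n. c n \<in> Alev n) \<and> in_NR_pure_atom (graph_on (UNIV :: nat set) c))"
  by (intro conjI part1 part2 part3 part4 part5)

end
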